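(* Let $G=G_1\,\square\,\cdots\,\square\, G_d$, where each $G_j$ is a connected $k_j$-regular graph and $k=k_1+\cdots+k_d$ is odd. If the set of Laplacian eigenvalues of $G_j$ consists of even integers for each $j\in\{1,\ldots,d\}$, then for every vertex $u$ of $G$, $\uparrow^{2}G$ has Laplacian perfect state transfer between $(0,u)$ and $(1,u)$ at time $\frac{\pi}{2}$.
   Context: All graphs are simple, undirected, unweighted and connected. The Cartesian product $G\,\square\, H$ of graphs on $m$ and $n$ vertices is the graph with Laplacian matrix $L(G)\otimes I_n+I_m\otimes L(H)$, where $L=D-A$ is the Laplacian. The blow-up $\uparrow^{2}G$ has vertex set $\mathbb{Z}_2\times V(G)$, with $(l,u)\sim(m,v)$ iff $u\sim v$ in $G$. For a graph $X$ with Laplacian $L$, $U(t)=\exp(itL)$, and $X$ has Laplacian perfect state transfer between vertices $a,b$ at time $\tau$ if $U(\tau)\mathbf{e}_a=\gamma\mathbf{e}_b$ for some $\gamma\in\mathbb{C}$. *)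

theory Defs
  imports Complex_Main
begin

definition simple_graph :: "'a set \<Rightarrow> ('a \<Rightarrow> 'a \<Rightarrow> bool) \<Rightarrow> bool" where
  "simple_graph V E \<longleftrightarrow> finite V \<and> (\<forall>u v. E u v \<longrightarrow> u \<in> V \<and> v \<in> V)
     \<and> (\<forall>u v. E u v \<longrightarrow> E v u) \<and> (\<forall>u. \<not> E u u)"

definition connected_graph :: "'a set \<Rightarrow> ('a \<Rightarrow> 'a \<Rightarrow> bool) \<Rightarrow> bool" where
  "connected_graph V E \<longleftrightarrow> V \<noteq> {} \<and> (\<forall>u\<in>V. \<forall>v\<in>V. E\<^sup>*\<^sup>* u v)"

definition nbrs :: "'a set \<Rightarrow> ('a \<Rightarrow> 'a \<Rightarrow> bool) \<Rightarrow> 'a \<Rightarrow> 'a set" where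
  "nbrs V E u = {v \<in> V. E u v}"

definition regular_graph :: "'a set \<Rightarrow> ('a \<Rightarrow> 'a \<Rightarrow> bool) \<Rightarrow> nat \<Rightarrow> bool" where
  "regular_graph V E k \<longleftrightarrow> (\<forall>u\<in>V. card (nbrs V E u) = k)"

text \<open>Laplacian L = D - A acting on vertex functions (column vectors indexed by V).\<close>
definition laplacian :: "'a set \<Rightarrow> ('a \<Rightarrow> 'a \<Rightarrow> bool) \<Rightarrow> ('a \<Rightarrow> 'b::comm_ring_1) \<Rightarrow> 'a \<Rightarrow> 'b" where
  "laplacian V E f u = of_nat (card (nbrs V E u)) * f u - (\<Sum>v\<in>nbrs V E u. f v)"

text \<open>Laplacian eigenvalues (the Laplacian is real symmetric, so all eigenvalues are real).\<close>
definition lap_eigenvalue :: "'a set \<Rightarrow> ('a \<Rightarrow> 'a \<Rightarrow> bool) \<Rightarrow> real \<Rightarrow> bool" where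
  "lap_eigenvalue V E mu \<longleftrightarrow>
     (\<exists>f :: 'a \<Rightarrow> real. (\<exists>u\<in>V. f u \<noteq> 0) \<and> (\<forall>u\<in>V. laplacian V E f u = mu * f u))"

text \<open>(U(t) e_a)(b) where U(t) = exp(i t L) = sum_n (i t L)^n / n!.\<close>
definition transition :: "'a set \<Rightarrow> ('a \<Rightarrow> 'a \<Rightarrow> bool) \<Rightarrow> real \<Rightarrow> 'a \<Rightarrow> 'a \<Rightarrow> complex" where
  "transition V E t a b =
     (\<Sum>n. ((\<i> * complex_of_real t) ^ n / of_nat (fact n))
            * ((laplacian V E ^^ n) (\<lambda>x. if x = a then 1 else 0)) b)"

definition lap_pst :: "'a set \<Rightarrow> ('a \<Rightarrow> 'a \<Rightarrow> bool) \<Rightarrow> 'a \<Rightarrow> 'a \<Rightarrow> real \<Rightarrow> bool" where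
  "lap_pst V E a b \<tau> \<longleftrightarrow>
     (\<exists>\<gamma>::complex. \<forall>x\<in>V. transition V E \<tau> a x = (if x = b then \<gamma> else 0))"

text \<open>Cartesian product G_0 [] ... [] G_(d-1); vertices are lists of length d.\<close>
definition cart_V :: "nat \<Rightarrow> (nat \<Rightarrow> 'a set) \<Rightarrow> 'a list set" where
  "cart_V d Vs = {xs. length xs = d \<and> (\<forall>j<d. xs ! j \<in> Vs j)}"

definition cart_E :: "nat \<Rightarrow> (nat \<Rightarrow> 'a set) \<Rightarrow> (nat \<Rightarrow> 'a \<Rightarrow> 'a \<Rightarrow> bool) \<Rightarrow> 'a list \<Rightarrow> 'a list \<Rightarrow> bool" where
  "cart_E d Vs Es xs ys \<longleftrightarrow> xs \<in> cart_V d Vs \<and> ys \<in> cart_V d Vs \<and>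
     (\<exists>j<d. Es j (xs ! j) (ys ! j) \<and> (\<forall>i<d. i \<noteq> j \<longrightarrow> xs ! i = ys ! i))"

text \<open>Blow-up: Z_2 is represented by bool (False = 0, True = 1).\<close>
definition blowup_V :: "'a set \<Rightarrow> (bool \<times> 'a) set" where
  "blowup_V V = UNIV \<times> V"

definition blowup_E :: "('a \<Rightarrow> 'a \<Rightarrow> bool) \<Rightarrow> bool \<times> 'a \<Rightarrow> bool \<times> 'a \<Rightarrow> bool" where
  "blowup_E E x y \<longleftrightarrow> E (snd x) (snd y)"

end

theory Submission
  imports Defs "HOL-Library.FuncSet" "HOL-Computational_Algebra.Fundamental_Theorem_Algebra"
begin

abbreviation LL :: "'a set \<Rightarrow> ('a \<Rightarrow> 'a \<Rightarrow> bool) \<Rightarrow> ('a \<Rightarrow> complex) \<Rightarrow> 'a \<Rightarrow> complex" where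
  "LL V E \<equiv> laplacian V E"

definition eigen :: "'a set \<Rightarrow> ('a \<Rightarrow> 'a \<Rightarrow> bool) \<Rightarrow> ('a \<Rightarrow> complex) \<Rightarrow> complex \<Rightarrow> bool" where
  "eigen V E g mu \<longleftrightarrow> (\<forall>x\<in>V. laplacian V E g x = mu * g x)"

lemma lap_lin:
  "laplacian V E (\<lambda>y. a * f y + b * g y) x = a * laplacian V E f x + b * (laplacian V E g x :: complex)"
  by (simp add: laplacian_def sum.distrib sum_distrib_left algebra_simps)

lemma lap_sum:
  "laplacian V E (\<lambda>y. \<Sum>i\<in>I. F i y) x = (\<Sum>i\<in>I. laplacian V E (F i) x :: complex)"
  by (simp add: laplacian_def sum_distrib_left sum_subtractf sum.swap[of _ I])

lemma lap_cong:
  assumes "\<forall>y\<in>V. f y = g y" "x \<in> V"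
  shows "laplacian V E f x = (laplacian V E g x :: complex)"
  using assms by (simp add: laplacian_def nbrs_def)

lemma pow_cong:
  assumes "\<forall>y\<in>V. f y = g y" "x \<in> V"
  shows "(laplacian V E ^^ n) f x = ((laplacian V E ^^ n) g x :: complex)"
  using assms(2)
proof (induction n arbitrary: x)
  case 0
  then show ?case using assms(1) by simp
next
  case (Suc n)
  then show ?case by (simp add: lap_cong[of V])
qed

lemma pow_lin:
  "(laplacian V E ^^ n) (\<lambda>y. a * f y + b * g y) x
     = a * (laplacian V E ^^ n) f x + b * ((laplacian V E ^^ n) g x :: complex)"
proof (induction n arbitrary: x)
  case 0
  then show ?case by simp
next
  case (Suc n)
  have "(laplacian V E ^^ n) (\<lambda>y. a * f y + b * g y) = (\<lambda>x. a * (laplacian V E ^^ n) f x + b * ((laplacian V E ^^ n) g x))"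
    using Suc by auto
  then show ?case by (simp add: lap_lin)
qed

lemma pow_sum:
  "(laplacian V E ^^ n) (\<lambda>y. \<Sum>i\<in>I. F i y) x = (\<Sum>i\<in>I. (laplacian V E ^^ n) (F i) x :: complex)"
proof (induction n arbitrary: x)
  case 0
  then show ?case by simp
next
  case (Suc n)
  have "(laplacian V E ^^ n) (\<lambda>y. \<Sum>i\<in>I. F i y) = (\<lambda>x. \<Sum>i\<in>I. (laplacian V E ^^ n) (F i) x)"
    using Suc by auto
  then show ?case by (simp add: lap_sum)
qed

lemma pow_eigen:
  assumes "eigen V E g mu" "x \<in> V"
  shows "(laplacian V E ^^ n) g x = mu ^ n * g x"
  using assms(2)
proof (induction n arbitrary: x)
  case 0
  then show ?case by simp
next
  case (Suc n)
  have "(laplacian V E ^^ Suc n) g x = laplacian V E ((laplacian V E ^^ n) g) x" by simp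
  also have "\<dots> = laplacian V E (\<lambda>y. mu ^ n * g y + 0 * g y) x"
    using Suc by (intro lap_cong) auto
  also have "\<dots> = mu ^ n * laplacian V E g x" by (subst lap_lin) simp
  also have "\<dots> = mu ^ Suc n * g x" using assms(1) Suc.prems by (simp add: eigen_def)
  finally show ?case .
qed

lemma series_eigen:
  assumes "eigen V E g mu" "x \<in> V"
  shows "(\<lambda>n. ((\<i> * complex_of_real t) ^ n / of_nat (fact n)) * (laplacian V E ^^ n) g x)
           sums (exp (\<i> * complex_of_real t * mu) * g x)"
proof -
  have "(\<lambda>n. (\<i> * complex_of_real t * mu) ^ n /\<^sub>R fact n) sums exp (\<i> * complex_of_real t * mu)"
    by (rule exp_converges)
  then have "(\<lambda>n. (\<i> * complex_of_real t * mu) ^ n /\<^sub>R fact n * g x) sums (exp (\<i> * complex_of_real t * mu) * g x)"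
    by (rule sums_mult2)
  moreover have "\<And>n. (\<i> * complex_of_real t * mu) ^ n /\<^sub>R fact n * g x
      = ((\<i> * complex_of_real t) ^ n / of_nat (fact n)) * (laplacian V E ^^ n) g x"
    using pow_eigen[OF assms] by (simp add: scaleR_conv_of_real power_mult_distrib field_simps)
  ultimately show ?thesis by simp
qed

lemma transition_decomp:
  assumes fin: "finite I" and eig: "\<forall>i\<in>I. eigen V E (F i) (mu i)"
    and dec: "\<forall>y\<in>V. (if y = a then 1 else 0) = (\<Sum>i\<in>I. F i y)" and x: "x \<in> V"
  shows "transition V E t a x = (\<Sum>i\<in>I. exp (\<i> * complex_of_real t * mu i) * F i x)"
proof -
  have "(\<lambda>n. \<Sum>i\<in>I. ((\<i> * complex_of_real t) ^ n / of_nat (fact n)) * (laplacian V E ^^ n) (F i) x)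
     sums (\<Sum>i\<in>I. exp (\<i> * complex_of_real t * mu i) * F i x)"
    using eig x by (intro sums_sum series_eigen) auto
  moreover have "\<And>n. (\<Sum>i\<in>I. ((\<i> * complex_of_real t) ^ n / of_nat (fact n)) * (laplacian V E ^^ n) (F i) x)
     = ((\<i> * complex_of_real t) ^ n / of_nat (fact n)) * (laplacian V E ^^ n) (\<lambda>y. if y = a then 1 else 0) x"
    by (subst pow_cong[OF dec x]) (simp add: pow_sum sum_distrib_left)
  ultimately show ?thesis unfolding transition_def by (simp add: sums_iff)
qed


lemma lap_sym:
  assumes sg: "simple_graph V E"
  shows "(\<Sum>x\<in>V. laplacian V E f x * g x) = (\<Sum>x\<in>V. f x * (laplacian V E g x :: complex))"
proof -
  have fin: "finite V" and sym: "\<And>x y. E x y \<Longrightarrow> E y x" using sg by (auto simp: simple_graph_def)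
  have nb: "\<And>h x. (\<Sum>y\<in>nbrs V E x. h y) = (\<Sum>y\<in>V. if E x y then h y else (0::complex))"
    unfolding nbrs_def using fin by (simp add: sum.inter_filter)
  have "(\<Sum>x\<in>V. (\<Sum>y\<in>nbrs V E x. f y) * g x) = (\<Sum>x\<in>V. \<Sum>y\<in>V. if E x y then f y * g x else 0)"
    unfolding nb sum_distrib_right by (intro sum.cong refl) simp
  also have "\<dots> = (\<Sum>y\<in>V. \<Sum>x\<in>V. if E x y then f y * g x else 0)" by (rule sum.swap)
  also have "\<dots> = (\<Sum>y\<in>V. \<Sum>x\<in>V. if E y x then f y * g x else 0)"
    by (intro sum.cong refl) (metis sym)
  also have "\<dots> = (\<Sum>y\<in>V. f y * (\<Sum>x\<in>nbrs V E y. g x))"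
    unfolding nb sum_distrib_left by (intro sum.cong refl) simp
  finally have *: "(\<Sum>x\<in>V. (\<Sum>y\<in>nbrs V E x. f y) * g x) = (\<Sum>y\<in>V. f y * (\<Sum>x\<in>nbrs V E y. g x))" .
  show ?thesis
    unfolding laplacian_def using *
    by (simp add: left_diff_distrib right_diff_distrib sum_subtractf algebra_simps)
qed

lemma lap_cnj: "laplacian V E (\<lambda>y. cnj (f y)) x = cnj (laplacian V E f x)"
  by (simp add: laplacian_def)

lemma sumsq_zero:
  assumes "finite V" "(\<Sum>x\<in>V. h x * cnj (h x)) = 0" "x \<in> V"
  shows "h x = (0::complex)"
proof -
  have "(\<Sum>x\<in>V. (Re (h x))\<^sup>2 + (Im (h x))\<^sup>2) = 0"
    using arg_cong[OF assms(2), of Re] by (simp add: complex_mult_cnj Re_sum)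
  then have "\<forall>x\<in>V. (Re (h x))\<^sup>2 + (Im (h x))\<^sup>2 = 0"
    using assms(1) by (subst (asm) sum_nonneg_eq_0_iff) auto
  then show ?thesis using assms(3) by (auto simp: complex_eq_iff)
qed

lemma eigen_real:
  assumes sg: "simple_graph V E" and e: "eigen V E g mu" and nz: "\<exists>x\<in>V. g x \<noteq> 0"
  shows "cnj mu = mu"
proof -
  have fin: "finite V" using sg by (simp add: simple_graph_def)
  have "(\<Sum>x\<in>V. laplacian V E g x * cnj (g x)) = (\<Sum>x\<in>V. g x * laplacian V E (\<lambda>y. cnj (g y)) x)"
    by (rule lap_sym[OF sg])
  then have "(\<Sum>x\<in>V. mu * g x * cnj (g x)) = (\<Sum>x\<in>V. g x * cnj (mu * g x))"
    using e by (simp add: eigen_def lap_cnj)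
  then have "(\<Sum>x\<in>V. (mu - cnj mu) * (g x * cnj (g x))) = 0"
    by (simp add: algebra_simps sum_subtractf)
  then have "(mu - cnj mu) * (\<Sum>x\<in>V. g x * cnj (g x)) = 0"
    by (simp add: sum_distrib_left)
  moreover have "(\<Sum>x\<in>V. g x * cnj (g x)) \<noteq> 0" using sumsq_zero[OF fin] nz by blast
  ultimately show ?thesis by simp
qed

lemma sq_lemma:
  assumes sg: "simple_graph V E" and r: "cnj r = r"
    and h: "\<forall>x\<in>V. laplacian V E (\<lambda>y. laplacian V E f y - r * f y) x
                  - r * (laplacian V E f x - r * f x) = 0"
  shows "\<forall>x\<in>V. laplacian V E f x - r * f x = 0"
proof -
  have fin: "finite V" using sg by (simp add: simple_graph_def)
  define hh where "hh = (\<lambda>y. laplacian V E f y - r * f y)"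
  have "(\<Sum>x\<in>V. hh x * cnj (hh x)) = (\<Sum>x\<in>V. laplacian V E f x * cnj (hh x)) - r * (\<Sum>x\<in>V. f x * cnj (hh x))"
  proof -
    have "\<And>x c. hh x * c = laplacian V E f x * c - r * (f x * c)" by (simp add: hh_def algebra_simps)
    then show ?thesis by (simp add: sum_subtractf sum_distrib_left)
  qed
  also have "(\<Sum>x\<in>V. laplacian V E f x * cnj (hh x)) = (\<Sum>x\<in>V. f x * laplacian V E (\<lambda>y. cnj (hh y)) x)"
    by (rule lap_sym[OF sg])
  also have "\<dots> = (\<Sum>x\<in>V. f x * cnj (laplacian V E hh x))" by (simp add: lap_cnj)
  also have "(\<Sum>x\<in>V. f x * cnj (laplacian V E hh x)) - r * (\<Sum>x\<in>V. f x * cnj (hh x))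
      = (\<Sum>x\<in>V. f x * cnj (laplacian V E hh x - r * hh x))"
    using r by (simp add: algebra_simps sum_subtractf sum_distrib_left)
  also have "\<dots> = 0" using h by (simp add: hh_def)
  finally have "(\<Sum>x\<in>V. hh x * cnj (hh x)) = 0" .
  then have "\<forall>x\<in>V. hh x = 0" using sumsq_zero[OF fin, of hh] by blast
  then show ?thesis by (simp add: hh_def)
qed


definition decomp :: "'a set \<Rightarrow> ('a \<Rightarrow> 'a \<Rightarrow> bool) \<Rightarrow> ('a \<Rightarrow> complex) \<Rightarrow> bool" where
  "decomp V E f \<longleftrightarrow> (\<exists>ps. (\<forall>(g,mu)\<in>set ps. eigen V E g mu) \<and> (\<forall>x\<in>V. f x = (\<Sum>(g,mu)\<leftarrow>ps. g x)))"

fun opp :: "'a set \<Rightarrow> ('a \<Rightarrow> 'a \<Rightarrow> bool) \<Rightarrow> (nat \<Rightarrow> complex) \<Rightarrow> nat \<Rightarrow> ('a \<Rightarrow> complex) \<Rightarrow> 'a \<Rightarrow> complex" where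
  "opp V E rt 0 f = f"
| "opp V E rt (Suc n) f = opp V E rt n (\<lambda>y. laplacian V E f y - rt n * f y)"

lemma lap_sumlist_eigen:
  assumes "\<forall>(g,mu)\<in>set ps. eigen V E g mu" "x \<in> V"
  shows "laplacian V E (\<lambda>y. \<Sum>(g,mu)\<leftarrow>ps. c mu * g y) x = (\<Sum>(g,mu)\<leftarrow>ps. c mu * mu * g x)"
  using assms(1)
proof (induction ps)
  case Nil
  then show ?case by (simp add: laplacian_def)
next
  case (Cons p ps)
  obtain g mu where p: "p = (g, mu)" by fastforce
  have "laplacian V E (\<lambda>y. \<Sum>(g,mu)\<leftarrow>p # ps. c mu * g y) x
      = laplacian V E (\<lambda>y. c mu * g y + 1 * (\<Sum>(g,mu)\<leftarrow>ps. c mu * g y)) x"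
    by (simp add: p)
  also have "\<dots> = c mu * laplacian V E g x + laplacian V E (\<lambda>y. \<Sum>(g,mu)\<leftarrow>ps. c mu * g y) x"
    by (subst lap_lin) simp
  also have "\<dots> = c mu * (mu * g x) + (\<Sum>(g,mu)\<leftarrow>ps. c mu * mu * g x)"
    using Cons assms(2) by (simp add: p eigen_def)
  finally show ?case by (simp add: p)
qed

lemma sum_list_filter_split:
  "(\<Sum>p\<leftarrow>xs. F p) = (\<Sum>p\<leftarrow>filter P xs. F p) + (\<Sum>p\<leftarrow>filter (\<lambda>p. \<not> P p) xs. (F p :: complex))"
  by (induction xs) auto

lemma decomp_opp:
  assumes sg: "simple_graph V E"
  shows "\<forall>x\<in>V. opp V E rt n f x = 0 \<Longrightarrow> decomp V E f"
proof (induction n arbitrary: f)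
  case 0
  then show ?case unfolding decomp_def by (intro exI[of _ "[]"]) simp
next
  case (Suc n)
  define r where "r = rt n"
  define h where "h = (\<lambda>y. laplacian V E f y - r * f y)"
  have "decomp V E h" using Suc by (simp add: h_def r_def)
  then obtain ps where ps_eig: "\<forall>(g,mu)\<in>set ps. eigen V E g mu"
    and ps_sum: "\<forall>x\<in>V. h x = (\<Sum>(g,mu)\<leftarrow>ps. g x)"
    unfolding decomp_def by blast
  define qs where "qs = filter (\<lambda>(g,mu). mu \<noteq> r) ps"
  define zs where "zs = filter (\<lambda>(g,mu). \<not> mu \<noteq> r) ps"
  have qs_eig: "\<forall>(g,mu)\<in>set qs. eigen V E g mu" and zs_eig: "\<forall>(g,mu)\<in>set zs. eigen V E g mu"
    using ps_eig by (auto simp: qs_def zs_def)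
  have zs_r: "\<forall>(g,mu)\<in>set zs. mu = r" by (auto simp: zs_def)
  have qs_r: "\<forall>(g,mu)\<in>set qs. mu \<noteq> r" by (auto simp: qs_def)
  define c where "c = (\<lambda>mu. inverse (mu - r))"
  define f' where "f' = (\<lambda>y. f y - (\<Sum>(g,mu)\<leftarrow>qs. c mu * g y))"
  define G where "G = (\<lambda>y. \<Sum>(g,mu)\<leftarrow>zs. (\<lambda>_. 1) mu * g y)"
  have hsplit: "\<forall>x\<in>V. h x = (\<Sum>(g,mu)\<leftarrow>qs. g x) + G x"
  proof
    fix x assume x: "x \<in> V"
    have "h x = (\<Sum>(g,mu)\<leftarrow>ps. g x)" using ps_sum x by blast
    also have "\<dots> = (\<Sum>(g,mu)\<leftarrow>qs. g x) + (\<Sum>(g,mu)\<leftarrow>zs. g x)"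
      unfolding qs_def zs_def by (induction ps) auto
    finally show "h x = (\<Sum>(g,mu)\<leftarrow>qs. g x) + G x" by (simp add: G_def)
  qed
  have qs_c: "(\<Sum>(g,mu)\<leftarrow>qs. c mu * mu * g x) - r * (\<Sum>(g,mu)\<leftarrow>qs. c mu * g x)
      = (\<Sum>(g,mu)\<leftarrow>qs. g x)" for x
  proof -
    have "(\<Sum>(g,mu)\<leftarrow>qs. c mu * mu * g x) - r * (\<Sum>(g,mu)\<leftarrow>qs. c mu * g x)
        = (\<Sum>(g,mu)\<leftarrow>qs. c mu * (mu - r) * g x)"
      by (induction qs) (auto simp: algebra_simps)
    also have "\<dots> = (\<Sum>(g,mu)\<leftarrow>qs. g x)"
      using qs_r by (intro arg_cong[of _ _ sum_list] map_cong) (auto simp: c_def)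
    finally show ?thesis .
  qed
  have H: "\<forall>x\<in>V. laplacian V E f' x - r * f' x = G x"
  proof
    fix x assume x: "x \<in> V"
    have "laplacian V E f' x = laplacian V E (\<lambda>y. 1 * f y + (-1) * (\<Sum>(g,mu)\<leftarrow>qs. c mu * g y)) x"
      by (simp add: f'_def)
    also have "\<dots> = laplacian V E f x - (\<Sum>(g,mu)\<leftarrow>qs. c mu * mu * g x)"
      by (subst lap_lin) (simp add: lap_sumlist_eigen[OF qs_eig x])
    finally have "laplacian V E f' x - r * f' x
        = h x - ((\<Sum>(g,mu)\<leftarrow>qs. c mu * mu * g x) - r * (\<Sum>(g,mu)\<leftarrow>qs. c mu * g x))"
      by (simp add: f'_def h_def algebra_simps)
    also have "\<dots> = G x" using hsplit x qs_c by simp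
    finally show "laplacian V E f' x - r * f' x = G x" .
  qed
  have G0: "\<forall>x\<in>V. laplacian V E G x - r * G x = 0"
  proof
    fix x assume x: "x \<in> V"
    have "laplacian V E G x = (\<Sum>(g,mu)\<leftarrow>zs. 1 * mu * g x)"
      unfolding G_def by (rule lap_sumlist_eigen[OF zs_eig x])
    also have "\<dots> = (\<Sum>(g,mu)\<leftarrow>zs. r * g x)"
      using zs_r by (intro arg_cong[of _ _ sum_list] map_cong) auto
    also have "\<dots> = r * G x" unfolding G_def by (induction zs) (auto simp: algebra_simps)
    finally show "laplacian V E G x - r * G x = 0" by simp
  qed
  have Hz: "\<forall>x\<in>V. laplacian V E f' x - r * f' x = 0"
  proof (cases "cnj r = r")
    case True
    show ?thesis
    proof (rule sq_lemma[OF sg True], intro ballI)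
      fix x assume x: "x \<in> V"
      have "laplacian V E (\<lambda>y. laplacian V E f' y - r * f' y) x = laplacian V E G x"
        using H x by (intro lap_cong) auto
      then show "laplacian V E (\<lambda>y. laplacian V E f' y - r * f' y) x - r * (laplacian V E f' x - r * f' x) = 0"
        using H G0 x by simp
    qed
  next
    case False
    have "\<forall>(g,mu)\<in>set zs. \<forall>x\<in>V. g x = 0"
      using eigen_real[OF sg] zs_eig zs_r False by fastforce
    then have "\<forall>x\<in>V. G x = 0" unfolding G_def
      by (induction zs) auto
    then show ?thesis using H by simp
  qed
  define ps' where "ps' = (f', r) # map (\<lambda>(g,mu). (\<lambda>y. c mu * g y, mu)) qs"
  have "\<forall>(g,mu)\<in>set ps'. eigen V E g mu"
  proof -
    have "eigen V E f' r" using Hz by (simp add: eigen_def)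
    moreover have "eigen V E (\<lambda>y. c mu * g y) mu" if "(g,mu) \<in> set qs" for g mu
    proof -
      have "eigen V E g mu" using qs_eig that by blast
      then show ?thesis unfolding eigen_def
        using lap_lin[of V E "c mu" g 0 g] by simp
    qed
    ultimately show ?thesis by (auto simp: ps'_def)
  qed
  moreover have "\<forall>x\<in>V. f x = (\<Sum>(g,mu)\<leftarrow>ps'. g x)"
    by (simp add: ps'_def f'_def comp_def case_prod_beta split_def)
  ultimately show ?case unfolding decomp_def by blast
qed


lemma lin_dep:
  assumes "finite V"
  shows "finite I \<Longrightarrow> card V < card I \<Longrightarrow>
    \<exists>c. (\<exists>i\<in>I. c i \<noteq> 0) \<and> (\<forall>x\<in>V. (\<Sum>i\<in>I. c i * g i x) = (0::complex))"
  using assms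
proof (induction V arbitrary: I g rule: finite_induct)
  case empty
  then obtain i where "i \<in> I" by fastforce
  then show ?case by (intro exI[of _ "\<lambda>j. if j = i then 1 else 0"]) auto
next
  case (insert a V')
  show ?case
  proof (cases "\<forall>i\<in>I. g i a = 0")
    case True
    have "card V' < card I" using insert by simp
    from insert.IH[OF insert.prems(1) this] obtain c where
      c: "\<exists>i\<in>I. c i \<noteq> 0" "\<forall>x\<in>V'. (\<Sum>i\<in>I. c i * g i x) = 0" by blast
    then show ?thesis using True by (intro exI[of _ c]) auto
  next
    case False
    then obtain j where j: "j \<in> I" "g j a \<noteq> 0" by blast
    define h where "h = (\<lambda>i x. g i x - (g i a / g j a) * g j x)"
    define I' where "I' = I - {j}"
    have finI': "finite I'" using insert by (simp add: I'_def)
    have "card V' < card I'" using insert j by (simp add: I'_def)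
    from insert.IH[OF finI' this] obtain c' where
      c': "\<exists>i\<in>I'. c' i \<noteq> 0" "\<forall>x\<in>V'. (\<Sum>i\<in>I'. c' i * h i x) = 0" by blast
    define c where "c = (\<lambda>i. if i = j then - (\<Sum>l\<in>I'. c' l * g l a) / g j a else c' i)"
    have key: "(\<Sum>i\<in>I. c i * g i x) = (\<Sum>i\<in>I'. c' i * h i x)" for x
    proof -
      have "(\<Sum>i\<in>I. c i * g i x) = c j * g j x + (\<Sum>i\<in>I'. c i * g i x)"
        unfolding I'_def using j insert.prems(1) by (simp add: sum.remove)
      also have "(\<Sum>i\<in>I'. c i * g i x) = (\<Sum>i\<in>I'. c' i * g i x)"
        by (intro sum.cong) (auto simp: c_def I'_def)
      also have "(\<Sum>i\<in>I'. c' i * h i x) = (\<Sum>i\<in>I'. c' i * g i x) - (\<Sum>i\<in>I'. c' i * g i a) / g j a * g j x"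
        by (simp add: h_def algebra_simps sum_subtractf sum_distrib_left sum_distrib_right sum_divide_distrib)
      ultimately show ?thesis by (simp add: c_def)
    qed
    have ha: "h i a = 0" for i using j by (simp add: h_def)
    show ?thesis
    proof (intro exI[of _ c] conjI)
      show "\<exists>i\<in>I. c i \<noteq> 0" using c' by (auto simp: c_def I'_def)
      show "\<forall>x\<in>insert a V'. (\<Sum>i\<in>I. c i * g i x) = 0"
        using c' key ha by auto
    qed
  qed
qed

definition peval :: "'a set \<Rightarrow> ('a \<Rightarrow> 'a \<Rightarrow> bool) \<Rightarrow> complex poly \<Rightarrow> ('a \<Rightarrow> complex) \<Rightarrow> 'a \<Rightarrow> complex" where
  "peval V E p f x = (\<Sum>k\<le>degree p. coeff p k * (laplacian V E ^^ k) f x)"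

lemma peval_eq:
  assumes "degree p \<le> N"
  shows "peval V E p f x = (\<Sum>k\<le>N. coeff p k * (laplacian V E ^^ k) f x)"
  unfolding peval_def using assms
  by (intro sum.mono_neutral_left) (auto simp: coeff_eq_0)

lemma peval_mult_lin:
  "peval V E (p * [:-r, 1:]) f x = peval V E p (\<lambda>y. laplacian V E f y - r * f y) x"
proof -
  define D where "D = degree p"
  have pe: "p * [:-r, 1:] = smult (-r) p + pCons 0 p" by simp
  have dg: "degree (p * [:-r, 1:]) \<le> Suc D"
    unfolding pe D_def by (meson degree_add_le degree_pCons_le degree_smult_le le_SucI)
  have "peval V E (p * [:-r, 1:]) f x = (\<Sum>k\<le>Suc D. coeff (p * [:-r, 1:]) k * (laplacian V E ^^ k) f x)"
    by (rule peval_eq[OF dg])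
  also have "\<dots> = (-r) * (\<Sum>k\<le>Suc D. coeff p k * (laplacian V E ^^ k) f x)
       + (\<Sum>k\<le>Suc D. coeff (pCons 0 p) k * (laplacian V E ^^ k) f x)"
    by (simp only: pe coeff_add coeff_smult distrib_right sum.distrib sum_distrib_left mult.assoc)
  also have "(\<Sum>k\<le>Suc D. coeff p k * (laplacian V E ^^ k) f x) = (\<Sum>k\<le>D. coeff p k * (laplacian V E ^^ k) f x)"
    by (simp add: D_def coeff_eq_0)
  also have "(\<Sum>k\<le>Suc D. coeff (pCons 0 p) k * (laplacian V E ^^ k) f x)
      = (\<Sum>k\<le>D. coeff p k * (laplacian V E ^^ k) (laplacian V E f) x)"
    by (subst sum.atMost_Suc_shift) (simp del: funpow.simps add: funpow_Suc_right)
  finally have 1: "peval V E (p * [:-r, 1:]) f x = (-r) * (\<Sum>k\<le>D. coeff p k * (laplacian V E ^^ k) f x)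
      + (\<Sum>k\<le>D. coeff p k * (laplacian V E ^^ k) (laplacian V E f) x)" .
  have "peval V E p (\<lambda>y. laplacian V E f y - r * f y) x
      = (\<Sum>k\<le>D. coeff p k * (laplacian V E ^^ k) (\<lambda>y. 1 * laplacian V E f y + (-r) * f y) x)"
    by (simp add: peval_def D_def)
  also have "\<dots> = (\<Sum>k\<le>D. coeff p k * ((laplacian V E ^^ k) (laplacian V E f) x + (-r) * (laplacian V E ^^ k) f x))"
    by (subst pow_lin) simp
  also have "\<dots> = (\<Sum>k\<le>D. coeff p k * (laplacian V E ^^ k) (laplacian V E f) x) + (-r) * (\<Sum>k\<le>D. coeff p k * (laplacian V E ^^ k) f x)"
    by (simp only: distrib_left sum.distrib sum_distrib_left mult.left_commute)
  finally show ?thesis using 1 by (simp only: add.commute)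
qed

lemma peval_opp:
  "peval V E (\<Prod>i<n. [:-rt i, 1:]) f x = opp V E rt n f x"
proof (induction n arbitrary: f)
  case 0
  then show ?case by (simp add: peval_def)
next
  case (Suc n)
  have "(\<Prod>i<Suc n. [:-rt i,1:]) = (\<Prod>i<n. [:-rt i,1:]) * [:-rt n,1:]" by simp
  then show ?case by (simp only: peval_mult_lin Suc opp.simps)
qed

lemma peval_smult: "peval V E (smult a p) f x = a * peval V E p f x"
  by (cases "a = 0") (simp_all add: peval_def sum_distrib_left algebra_simps)

lemma decomp_all:
  assumes sg: "simple_graph V E"
  shows "decomp V E f"
proof -
  have fin: "finite V" using sg by (simp add: simple_graph_def)
  define n where "n = card V"
  obtain c where c: "\<exists>i\<in>{..n}. c i \<noteq> 0"
      "\<forall>x\<in>V. (\<Sum>i\<in>{..n}. c i * (laplacian V E ^^ i) f x) = 0"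
    using lin_dep[OF fin, of "{..n}" "\<lambda>i. (laplacian V E ^^ i) f"] by (auto simp: n_def)
  define p where "p = (\<Sum>k\<le>n. monom (c k) k)"
  have cp: "coeff p k = (if k \<le> n then c k else 0)" for k
    by (simp add: p_def coeff_sum)
  have dp: "degree p \<le> n" by (rule degree_le) (simp add: cp)
  have p0: "p \<noteq> 0" using c(1) cp by (metis atMost_iff coeff_0)
  have pev: "\<forall>x\<in>V. peval V E p f x = 0"
    using c(2) by (simp add: peval_eq[OF dp] cp)
  obtain rt where rt: "smult (lead_coeff p) (\<Prod>i<degree p. [:-rt i, 1:]) = p"
    using complex_poly_decompose' by blast
  have "\<forall>x\<in>V. opp V E rt (degree p) f x = 0"
  proof
    fix x assume "x \<in> V"
    then have "peval V E (smult (lead_coeff p) (\<Prod>i<degree p. [:-rt i, 1:])) f x = 0"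
      using pev rt by simp
    then show "opp V E rt (degree p) f x = 0"
      using p0 by (simp add: peval_smult peval_opp)
  qed
  then show ?thesis by (rule decomp_opp[OF sg])
qed


lemma nbrs_cart:
  assumes sg: "\<forall>j<d. simple_graph (Vs j) (Es j)" and x: "x \<in> cart_V d Vs"
  shows "nbrs (cart_V d Vs) (cart_E d Vs Es) x = (\<Union>j\<in>{..<d}. (\<lambda>y. x[j:=y]) ` nbrs (Vs j) (Es j) (x!j))"
proof (intro equalityI subsetI)
  fix z assume "z \<in> nbrs (cart_V d Vs) (cart_E d Vs Es) x"
  then have z: "z \<in> cart_V d Vs" and "cart_E d Vs Es x z" by (auto simp: nbrs_def)
  then obtain j where j: "j < d" "Es j (x!j) (z!j)" "\<forall>i<d. i \<noteq> j \<longrightarrow> x!i = z!i"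
    by (auto simp: cart_E_def)
  have "z = x[j := z!j]" using x z j by (intro nth_equalityI) (auto simp: cart_V_def nth_list_update)
  moreover have "z!j \<in> nbrs (Vs j) (Es j) (x!j)" using z j by (auto simp: nbrs_def cart_V_def)
  ultimately show "z \<in> (\<Union>j\<in>{..<d}. (\<lambda>y. x[j:=y]) ` nbrs (Vs j) (Es j) (x!j))" using j by blast
next
  fix z assume "z \<in> (\<Union>j\<in>{..<d}. (\<lambda>y. x[j:=y]) ` nbrs (Vs j) (Es j) (x!j))"
  then obtain j y where j: "j < d" "y \<in> Vs j" "Es j (x!j) y" "z = x[j:=y]" by (auto simp: nbrs_def)
  have lx: "length x = d" using x by (simp add: cart_V_def)
  have zV: "z \<in> cart_V d Vs" using x j lx by (auto simp: cart_V_def nth_list_update)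
  have "cart_E d Vs Es x z" unfolding cart_E_def using x zV j lx
    by (intro conjI exI[of _ j]) (auto simp: nth_list_update)
  then show "z \<in> nbrs (cart_V d Vs) (cart_E d Vs Es) x" using zV by (simp add: nbrs_def)
qed

lemma sum_cart:
  assumes sg: "\<forall>j<d. simple_graph (Vs j) (Es j)" and x: "x \<in> cart_V d Vs"
  shows "(\<Sum>z\<in>nbrs (cart_V d Vs) (cart_E d Vs Es) x. F z)
       = (\<Sum>j<d. \<Sum>y\<in>nbrs (Vs j) (Es j) (x!j). (F (x[j:=y]) :: 'b::comm_monoid_add))"
proof -
  have lx: "length x = d" using x by (simp add: cart_V_def)
  have fin: "\<forall>j<d. finite (nbrs (Vs j) (Es j) (x!j))"
    using sg by (auto simp: simple_graph_def nbrs_def)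
  have irr: "\<forall>j<d. \<forall>y\<in>nbrs (Vs j) (Es j) (x!j). y \<noteq> x!j"
    using sg by (auto simp: simple_graph_def nbrs_def)
  have "(\<Sum>z\<in>nbrs (cart_V d Vs) (cart_E d Vs Es) x. F z)
      = (\<Sum>j<d. \<Sum>z\<in>(\<lambda>y. x[j:=y]) ` nbrs (Vs j) (Es j) (x!j). F z)"
    unfolding nbrs_cart[OF sg x]
  proof (rule sum.UNION_disjoint)
    show "finite {..<d}" by simp
    show "\<forall>j\<in>{..<d}. finite ((\<lambda>y. x[j:=y]) ` nbrs (Vs j) (Es j) (x!j))" using fin by auto
    show "\<forall>i\<in>{..<d}. \<forall>j\<in>{..<d}. i \<noteq> j \<longrightarrow>
      (\<lambda>y. x[i:=y]) ` nbrs (Vs i) (Es i) (x!i) \<inter> (\<lambda>y. x[j:=y]) ` nbrs (Vs j) (Es j) (x!j) = {}"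
    proof (intro ballI impI)
      fix i j assume ij: "i \<in> {..<d}" "j \<in> {..<d}" "i \<noteq> j"
      show "(\<lambda>y. x[i:=y]) ` nbrs (Vs i) (Es i) (x!i) \<inter> (\<lambda>y. x[j:=y]) ` nbrs (Vs j) (Es j) (x!j) = {}"
      proof (rule ccontr)
        assume "\<not> ?thesis"
        then obtain y y' where y: "y \<in> nbrs (Vs i) (Es i) (x!i)" "y' \<in> nbrs (Vs j) (Es j) (x!j)"
          "x[i:=y] = x[j:=y']" by blast
        then have "x[i:=y] ! i = x[j:=y'] ! i" by simp
        then have "y = x!i" using ij lx by (simp add: nth_list_update)
        then show False using irr y ij by auto
      qed
    qed
  qed
  also have "\<dots> = (\<Sum>j<d. \<Sum>y\<in>nbrs (Vs j) (Es j) (x!j). F (x[j:=y]))"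
  proof (intro sum.cong refl)
    fix j assume j: "j \<in> {..<d}"
    have "inj_on (\<lambda>y. x[j:=y]) (nbrs (Vs j) (Es j) (x!j))"
      by (rule inj_onI) (metis j lx lessThan_iff nth_list_update_eq)
    then show "(\<Sum>z\<in>(\<lambda>y. x[j:=y]) ` nbrs (Vs j) (Es j) (x!j). F z) = (\<Sum>y\<in>nbrs (Vs j) (Es j) (x!j). F (x[j:=y]))"
      by (simp add: sum.reindex)
  qed
  finally show ?thesis .
qed

lemma card_cart:
  assumes sg: "\<forall>j<d. simple_graph (Vs j) (Es j)" and x: "x \<in> cart_V d Vs"
  shows "card (nbrs (cart_V d Vs) (cart_E d Vs Es) x) = (\<Sum>j<d. card (nbrs (Vs j) (Es j) (x!j)))"
  using sum_cart[OF sg x, of "\<lambda>_. 1::nat"] by simp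

lemma eigen_prod:
  assumes sg: "\<forall>j<d. simple_graph (Vs j) (Es j)"
    and eig: "\<forall>j<d. eigen (Vs j) (Es j) (phi j) (lam j)"
  shows "eigen (cart_V d Vs) (cart_E d Vs Es) (\<lambda>x. \<Prod>j<d. phi j (x!j)) (\<Sum>j<d. lam j)"
  unfolding eigen_def
proof
  fix x assume x: "x \<in> cart_V d Vs"
  have lx: "length x = d" and xj: "\<forall>j<d. x!j \<in> Vs j" using x by (auto simp: cart_V_def)
  define Q where "Q = (\<lambda>j. \<Prod>i\<in>{..<d}-{j}. phi i (x!i))"
  have P1: "(\<Prod>i<d. phi i (x!i)) = phi j (x!j) * Q j" if "j < d" for j
    unfolding Q_def using that by (simp add: prod.remove)
  have P2: "(\<Prod>i<d. phi i (x[j:=y]!i)) = phi j y * Q j" if "j < d" for j y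
  proof -
    have "(\<Prod>i<d. phi i (x[j:=y]!i)) = phi j (x[j:=y]!j) * (\<Prod>i\<in>{..<d}-{j}. phi i (x[j:=y]!i))"
      using that by (simp add: prod.remove)
    also have "(\<Prod>i\<in>{..<d}-{j}. phi i (x[j:=y]!i)) = Q j"
      unfolding Q_def by (intro prod.cong) (auto simp: nth_list_update)
    finally show ?thesis using that lx by simp
  qed
  have "laplacian (cart_V d Vs) (cart_E d Vs Es) (\<lambda>x. \<Prod>j<d. phi j (x!j)) x
      = of_nat (\<Sum>j<d. card (nbrs (Vs j) (Es j) (x!j))) * (\<Prod>i<d. phi i (x!i))
        - (\<Sum>j<d. \<Sum>y\<in>nbrs (Vs j) (Es j) (x!j). \<Prod>i<d. phi i (x[j:=y]!i))"
    unfolding laplacian_def by (simp add: card_cart[OF sg x] sum_cart[OF sg x])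
  also have "\<dots> = (\<Sum>j<d. Q j * laplacian (Vs j) (Es j) (phi j) (x!j))"
  proof -
    have A: "(\<Sum>j<d. \<Sum>y\<in>nbrs (Vs j) (Es j) (x!j). \<Prod>i<d. phi i (x[j:=y]!i))
        = (\<Sum>j<d. Q j * (\<Sum>y\<in>nbrs (Vs j) (Es j) (x!j). phi j y))"
      by (intro sum.cong refl) (simp add: P2 sum_distrib_left mult.commute)
    have B: "of_nat (\<Sum>j<d. card (nbrs (Vs j) (Es j) (x!j))) * (\<Prod>i<d. phi i (x!i))
        = (\<Sum>j<d. Q j * (of_nat (card (nbrs (Vs j) (Es j) (x!j))) * phi j (x!j)))"
      unfolding of_nat_sum sum_distrib_right by (intro sum.cong refl) (simp add: P1)
    show ?thesis unfolding A B laplacian_def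
      by (simp add: right_diff_distrib sum_subtractf)
  qed
  also have "\<dots> = (\<Sum>j<d. lam j * (\<Prod>i<d. phi i (x!i)))"
    using eig xj by (intro sum.cong refl) (auto simp: eigen_def P1)
  also have "\<dots> = (\<Sum>j<d. lam j) * (\<Prod>i<d. phi i (x!i))" by (simp add: sum_distrib_right)
  finally show "laplacian (cart_V d Vs) (cart_E d Vs Es) (\<lambda>x. \<Prod>j<d. phi j (x!j)) x
      = (\<Sum>j<d. lam j) * (\<Prod>j<d. phi j (x!j))" .
qed


lemma nbrs_blowup: "nbrs (blowup_V V) (blowup_E E) p = UNIV \<times> nbrs V E (snd p)"
  by (auto simp: nbrs_def blowup_V_def blowup_E_def)

lemma sum_bool_times: "(\<Sum>q\<in>UNIV \<times> A. F q) = (\<Sum>y\<in>A. F (False, y)) + (\<Sum>y\<in>A. (F (True, y) :: complex))"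
proof -
  have "(\<Sum>q\<in>UNIV \<times> A. F q) = (\<Sum>c\<in>UNIV. \<Sum>y\<in>A. F (c, y))"
    by (simp add: sum.cartesian_product)
  also have "\<dots> = (\<Sum>y\<in>A. F (False, y)) + (\<Sum>y\<in>A. F (True, y))"
    by (simp add: UNIV_bool)
  finally show ?thesis .
qed

lemma card_bool_times: "card ((UNIV::bool set) \<times> (A::'a set)) = 2 * card A"
  by (simp add: card_cartesian_product card_UNIV_bool)

lemma eigen_lift:
  assumes "eigen V E g mu"
  shows "eigen (blowup_V V) (blowup_E E) (\<lambda>p. g (snd p)) (2 * mu)"
  unfolding eigen_def
proof
  fix p assume "p \<in> blowup_V V"
  then have x: "snd p \<in> V" by (auto simp: blowup_V_def)
  have "laplacian (blowup_V V) (blowup_E E) (\<lambda>p. g (snd p)) p = 2 * laplacian V E g (snd p)"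
    unfolding laplacian_def nbrs_blowup card_bool_times sum_bool_times by (simp add: algebra_simps)
  then show "laplacian (blowup_V V) (blowup_E E) (\<lambda>p. g (snd p)) p = 2 * mu * g (snd p)"
    using assms x by (simp add: eigen_def)
qed

definition sgn_b :: "bool \<Rightarrow> complex" where "sgn_b b = (if b then -1 else 1)"

lemma eigen_D:
  assumes u: "u \<in> V"
  shows "eigen (blowup_V V) (blowup_E E) (\<lambda>p. a * sgn_b (fst p) * (if snd p = u then 1 else 0))
           (2 * of_nat (card (nbrs V E u)))"
  unfolding eigen_def
proof
  fix p assume "p \<in> blowup_V V"
  obtain b x where p: "p = (b, x)" by fastforce
  have "laplacian (blowup_V V) (blowup_E E) (\<lambda>p. a * sgn_b (fst p) * (if snd p = u then 1 else 0)) p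
      = 2 * of_nat (card (nbrs V E x)) * (a * sgn_b b * (if x = u then 1 else 0))"
    unfolding laplacian_def nbrs_blowup card_bool_times sum_bool_times p
    by (simp add: sgn_b_def algebra_simps sum.distrib[symmetric])
  then show "laplacian (blowup_V V) (blowup_E E) (\<lambda>p. a * sgn_b (fst p) * (if snd p = u then 1 else 0)) p
      = 2 * of_nat (card (nbrs V E u)) * (a * sgn_b (fst p) * (if snd p = u then 1 else 0))"
    by (simp add: p)
qed

lemma lap_Re: "laplacian V E (\<lambda>y. Re (g y)) x = Re (laplacian V E g x)"
  by (simp add: laplacian_def Re_sum)

lemma lap_Im: "laplacian V E (\<lambda>y. Im (g y)) x = Im (laplacian V E g x)"
  by (simp add: laplacian_def Im_sum)

lemma even_decomp:
  assumes sg: "simple_graph V E"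
    and ev: "\<forall>mu. lap_eigenvalue V E mu \<longrightarrow> (\<exists>m::int. mu = 2 * of_int m)"
  shows "\<exists>ps. (\<forall>(g,mu)\<in>set ps. eigen V E g mu \<and> (\<exists>m::int. mu = of_int (2 * m)))
            \<and> (\<forall>x\<in>V. f x = (\<Sum>(g,mu)\<leftarrow>ps. g x))"
proof -
  obtain ps where ps: "\<forall>(g,mu)\<in>set ps. eigen V E g mu" "\<forall>x\<in>V. f x = (\<Sum>(g,mu)\<leftarrow>ps. g x)"
    using decomp_all[OF sg, of f] unfolding decomp_def by blast
  define ps' where "ps' = map (\<lambda>(g,mu). (g, if \<exists>x\<in>V. g x \<noteq> 0 then mu else 0)) ps"
  have "eigen V E g mu' \<and> (\<exists>m::int. mu' = of_int (2 * m))" if hyp: "(g, mu') \<in> set ps'" for g mu'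
  proof -
    obtain mu where gm: "(g, mu) \<in> set ps" and mu': "mu' = (if \<exists>x\<in>V. g x \<noteq> 0 then mu else 0)"
    proof -
      from hyp obtain p where p: "p \<in> set ps" "(g, mu') = (\<lambda>(g,mu). (g, if \<exists>x\<in>V. g x \<noteq> 0 then mu else 0)) p"
        unfolding ps'_def by auto
      obtain g0 mu0 where "p = (g0, mu0)" by fastforce
      then show ?thesis using p by (auto intro: that)
    qed
    have eg: "eigen V E g mu" using ps(1) gm by blast
    show ?thesis
    proof (cases "\<exists>x\<in>V. g x \<noteq> 0")
      case False
      have "\<forall>x\<in>V. laplacian V E g x = laplacian V E (\<lambda>_. 0) x"
        using False by (intro ballI lap_cong) auto
      then have "eigen V E g 0" by (simp add: eigen_def laplacian_def)
      then show ?thesis using False mu' by (intro conjI exI[of _ 0]) auto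
    next
      case True
      then obtain x0 where x0: "x0 \<in> V" "g x0 \<noteq> 0" by blast
      have "cnj mu = mu" by (rule eigen_real[OF sg eg True])
      then have "Im (cnj mu) = Im mu" by simp
      then have im: "Im mu = 0" by simp
      have reeig: "\<forall>x\<in>V. laplacian V E (\<lambda>y. Re (g y)) x = Re mu * Re (g x)"
        using eg im by (simp add: eigen_def lap_Re)
      have imeig: "\<forall>x\<in>V. laplacian V E (\<lambda>y. Im (g y)) x = Re mu * Im (g x)"
        using eg im by (simp add: eigen_def lap_Im)
      have "lap_eigenvalue V E (Re mu)"
      proof (cases "Re (g x0) = 0")
        case False
        then show ?thesis unfolding lap_eigenvalue_def using reeig x0
          by (intro exI[of _ "\<lambda>y. Re (g y)"] conjI bexI[of _ x0]) auto
      next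
        case True
        then have "Im (g x0) \<noteq> 0" using x0 by (simp add: complex_eq_iff)
        then show ?thesis unfolding lap_eigenvalue_def using imeig x0
          by (intro exI[of _ "\<lambda>y. Im (g y)"] conjI bexI[of _ x0]) auto
      qed
      then obtain m :: int where "Re mu = 2 * of_int m" using ev by blast
      then have "mu = of_int (2 * m)" using im by (simp add: complex_eq_iff)
      then show ?thesis using True mu' eg by auto
    qed
  qed
  then have "\<forall>(g,mu)\<in>set ps'. eigen V E g mu \<and> (\<exists>m::int. mu = of_int (2 * m))" by auto
  moreover have "\<forall>x\<in>V. f x = (\<Sum>(g,mu)\<leftarrow>ps'. g x)"
    using ps(2) by (simp add: ps'_def comp_def case_prod_beta split_def)
  ultimately show ?thesis by (intro exI[of _ ps'] conjI)
qed

lemma exp_even: "exp (\<i> * complex_of_real (pi / 2) * (2 * of_int (2 * M))) = 1"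
proof -
  have "\<i> * complex_of_real (pi / 2) * (2 * of_int (2 * M)) = \<i> * complex_of_real (2 * pi * real_of_int M)"
    by simp
  then show ?thesis by (simp only: cis_conv_exp[symmetric] cis_multiple_2pi Ints_of_int)
qed

lemma exp_odd:
  assumes "odd k"
  shows "exp (\<i> * complex_of_real (pi / 2) * (2 * of_nat k)) = -1"
proof -
  have "\<i> * complex_of_real (pi / 2) * (2 * of_nat k) = \<i> * complex_of_real (real k * pi)"
    by simp
  then have "exp (\<i> * complex_of_real (pi / 2) * (2 * of_nat k)) = cis pi ^ k"
    by (simp only: cis_conv_exp[symmetric] DeMoivre)
  then show ?thesis using assms by simp
qed


lemma eigen_scale: "eigen V E g mu \<Longrightarrow> eigen V E (\<lambda>x. a * g x) mu"
  unfolding eigen_def using lap_lin[of V E a g 0 g] by simp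

lemma sum_even:
  assumes "finite A" "\<forall>j\<in>A. \<exists>m::int. f j = (of_int (2 * m) :: complex)"
  shows "\<exists>M::int. (\<Sum>j\<in>A. f j) = of_int (2 * M)"
  using assms
proof (induction A rule: finite_induct)
  case empty
  then show ?case by (intro exI[of _ 0]) simp
next
  case (insert a A)
  then obtain M where M: "(\<Sum>j\<in>A. f j) = of_int (2 * M)" by blast
  obtain m where m: "f a = of_int (2 * m)" using insert.prems by blast
  show ?case using insert.hyps M m by (intro exI[of _ "m + M"]) simp
qed

lemma prod_indicator_list:
  assumes "length x = d" "length u = d"
  shows "(if x = u then 1 else 0) = (\<Prod>j<d. if x!j = u!j then 1 else (0::complex))"
proof (cases "x = u")
  case True
  then show ?thesis by simp
next
  case False
  then obtain j where "j < d" "x!j \<noteq> u!j" using assms by (auto simp: list_eq_iff_nth_eq)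
  then have "(\<Prod>j<d. if x!j = u!j then 1 else (0::complex)) = 0"
    by (subst prod_zero_iff) auto
  then show ?thesis using False by simp
qed

lemma sum_list_nth: "(\<Sum>(g,mu)\<leftarrow>ps. g y) = (\<Sum>r<length ps. fst (ps!r) y)"
  by (simp add: sum_list_sum_nth atLeast0LessThan case_prod_beta)


theorem theorem5:
  fixes d :: nat and Vs :: "nat \<Rightarrow> 'a set" and Es :: "nat \<Rightarrow> 'a \<Rightarrow> 'a \<Rightarrow> bool"
    and ks :: "nat \<Rightarrow> nat" and u :: "'a list"
  assumes graphs: "\<forall>j<d. simple_graph (Vs j) (Es j) \<and> connected_graph (Vs j) (Es j)
                          \<and> regular_graph (Vs j) (Es j) (ks j)"
    and k_odd: "odd (\<Sum>j<d. ks j)"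
    and even_eigs: "\<forall>j<d. \<forall>mu. lap_eigenvalue (Vs j) (Es j) mu \<longrightarrow> (\<exists>m::int. mu = 2 * of_int m)"
    and u: "u \<in> cart_V d Vs"
  shows "lap_pst (blowup_V (cart_V d Vs)) (blowup_E (cart_E d Vs Es)) (False, u) (True, u) (pi / 2)"
proof -
  define VG where "VG = cart_V d Vs"
  define EG where "EG = cart_E d Vs Es"
  define VB where "VB = blowup_V VG"
  define EB where "EB = blowup_E EG"
  have sg: "\<forall>j<d. simple_graph (Vs j) (Es j)" using graphs by blast
  have lu: "length u = d" and uj: "\<forall>j<d. u!j \<in> Vs j" using u by (auto simp: cart_V_def)
  have "\<forall>j. \<exists>ps. j < d \<longrightarrow> (\<forall>(g,mu)\<in>set ps. eigen (Vs j) (Es j) g mu \<and> (\<exists>m::int. mu = of_int (2 * m)))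
            \<and> (\<forall>x\<in>Vs j. (if x = u!j then 1 else 0) = (\<Sum>(g,mu)\<leftarrow>ps. g x))"
  proof (intro allI)
    fix j
    show "\<exists>ps. j < d \<longrightarrow> (\<forall>(g,mu)\<in>set ps. eigen (Vs j) (Es j) g mu \<and> (\<exists>m::int. mu = of_int (2 * m)))
            \<and> (\<forall>x\<in>Vs j. (if x = u!j then 1 else 0) = (\<Sum>(g,mu)\<leftarrow>ps. g x))"
    proof (cases "j < d")
      case True
      have sgj: "simple_graph (Vs j) (Es j)" using sg True by blast
      have evj: "\<forall>mu. lap_eigenvalue (Vs j) (Es j) mu \<longrightarrow> (\<exists>m::int. mu = 2 * of_int m)"
        by (rule mp[OF spec[OF even_eigs, of j] True])
      obtain ps where "(\<forall>(g,mu)\<in>set ps. eigen (Vs j) (Es j) g mu \<and> (\<exists>m::int. mu = of_int (2 * m)))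
            \<and> (\<forall>x\<in>Vs j. (if x = u!j then 1 else 0) = (\<Sum>(g,mu)\<leftarrow>ps. g x))"
        using even_decomp[OF sgj evj, where f = "\<lambda>x. if x = u!j then 1 else 0"] by (rule exE)
      then show ?thesis by (intro exI impI)
    next
      case False
      then show ?thesis by simp
    qed
  qed
  from choice[OF this] obtain ps where ps: "\<forall>j. j < d \<longrightarrow> (\<forall>(g,mu)\<in>set (ps j). eigen (Vs j) (Es j) g mu \<and> (\<exists>m::int. mu = of_int (2 * m)))
            \<and> (\<forall>x\<in>Vs j. (if x = u!j then 1 else 0) = (\<Sum>(g,mu)\<leftarrow>ps j. g x))"
    by (rule exE)
  define R where "R = (\<lambda>j. {..<length (ps j)})"
  define phi where "phi = (\<lambda>j r. fst (ps j ! r))"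
  define lam where "lam = (\<lambda>j r. snd (ps j ! r))"
  have R_eig: "eigen (Vs j) (Es j) (phi j r) (lam j r) \<and> (\<exists>m::int. lam j r = of_int (2 * m))"
    if "j < d" "r \<in> R j" for j r
  proof -
    have mem: "ps j ! r \<in> set (ps j)" using that by (intro nth_mem) (simp add: R_def)
    have A: "\<forall>p\<in>set (ps j). case p of (g,mu) \<Rightarrow> eigen (Vs j) (Es j) g mu \<and> (\<exists>m::int. mu = of_int (2 * m))"
      by (rule conjunct1[OF mp[OF spec[OF ps, of j] that(1)]])
    have "case ps j ! r of (g,mu) \<Rightarrow> eigen (Vs j) (Es j) g mu \<and> (\<exists>m::int. mu = of_int (2 * m))"
      by (rule bspec[OF A mem])
    then show ?thesis unfolding phi_def lam_def by (simp add: case_prod_beta)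
  qed
  have R_sum: "(if y = u!j then 1 else 0) = (\<Sum>r\<in>R j. phi j r y)" if "j < d" "y \<in> Vs j" for j y
    using ps that by (simp add: R_def phi_def sum_list_nth)
  define P where "P = PiE {..<d} R"
  define Psi where "Psi = (\<lambda>\<rho> x. \<Prod>j<d. phi j (\<rho> j) (x!j))"
  define Lam where "Lam = (\<lambda>\<rho>. \<Sum>j<d. lam j (\<rho> j))"
  have finP: "finite P" unfolding P_def R_def by (intro finite_PiE) auto
  have Psi_eig: "eigen VG EG (Psi \<rho>) (Lam \<rho>)" if "\<rho> \<in> P" for \<rho>
    unfolding VG_def EG_def Psi_def Lam_def
    using that R_eig by (intro eigen_prod[OF sg]) (auto simp: P_def PiE_iff)
  have Lam_even: "\<exists>M::int. Lam \<rho> = of_int (2 * M)" if "\<rho> \<in> P" for \<rho>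
    unfolding Lam_def using that R_eig by (intro sum_even) (auto simp: P_def PiE_iff)
  have dec_G: "(if x = u then 1 else 0) = (\<Sum>\<rho>\<in>P. Psi \<rho> x)" if x: "x \<in> VG" for x
  proof -
    have lx: "length x = d" and xj: "\<forall>j<d. x!j \<in> Vs j" using x by (auto simp: VG_def cart_V_def)
    have "(if x = u then 1 else 0) = (\<Prod>j<d. if x!j = u!j then 1 else (0::complex))"
      by (rule prod_indicator_list[OF lx lu])
    also have "\<dots> = (\<Prod>j<d. \<Sum>r\<in>R j. phi j r (x!j))"
      using R_sum xj by (intro prod.cong refl) auto
    also have "\<dots> = (\<Sum>\<rho>\<in>P. Psi \<rho> x)"
      unfolding P_def Psi_def by (rule prod_sum_PiE) (auto simp: R_def)
    finally show ?thesis .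
  qed
  have uG: "u \<in> VG" using u by (simp add: VG_def)
  have deg: "card (nbrs VG EG u) = (\<Sum>j<d. ks j)"
    unfolding VG_def EG_def using card_cart[OF sg u] graphs uj
    by (simp add: regular_graph_def)
  define I where "I = insert None (Some ` P)"
  define FF where "FF = (\<lambda>i. case i of None \<Rightarrow> (\<lambda>p. (1/2) * sgn_b (fst p) * (if snd p = u then 1 else 0))
                                | Some \<rho> \<Rightarrow> (\<lambda>p. (1/2) * Psi \<rho> (snd p)))"
  define MU where "MU = (\<lambda>i. case i of None \<Rightarrow> 2 * of_nat (card (nbrs VG EG u))
                                | Some \<rho> \<Rightarrow> 2 * Lam \<rho>)"
  have finI: "finite I" using finP by (simp add: I_def)
  have eigI: "\<forall>i\<in>I. eigen VB EB (FF i) (MU i)"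
  proof
    fix i assume "i \<in> I"
    then consider "i = None" | \<rho> where "\<rho> \<in> P" "i = Some \<rho>" by (auto simp: I_def)
    then show "eigen VB EB (FF i) (MU i)"
    proof cases
      case 1
      show ?thesis unfolding FF_def MU_def VB_def EB_def 1 option.case by (rule eigen_D[OF uG])
    next
      case 2
      have "eigen VG EG (\<lambda>x. (1/2) * Psi \<rho> x) (Lam \<rho>)" by (rule eigen_scale[OF Psi_eig[OF 2(1)]])
      from eigen_lift[OF this] show ?thesis unfolding FF_def MU_def VB_def EB_def 2(2) option.case .
    qed
  qed
  have sumI: "(\<Sum>i\<in>I. G i) = G None + (\<Sum>\<rho>\<in>P. G (Some \<rho>))" for G :: "_ \<Rightarrow> complex"
    unfolding I_def using finP by (simp add: sum.reindex)
  have decX: "\<forall>w\<in>VB. (if w = (False, u) then 1 else 0) = (\<Sum>i\<in>I. FF i w)"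
  proof
    fix w assume "w \<in> VB"
    then obtain b x where w: "w = (b, x)" "x \<in> VG" by (auto simp: VB_def blowup_V_def)
    have "(\<Sum>i\<in>I. FF i w) = (1/2) * sgn_b b * (if x = u then 1 else 0) + (1/2) * (\<Sum>\<rho>\<in>P. Psi \<rho> x)"
      unfolding sumI by (simp add: FF_def w sum_distrib_left)
    also have "\<dots> = (1/2) * (sgn_b b + 1) * (if x = u then 1 else 0)"
      using dec_G[OF w(2)] by (simp add: algebra_simps)
    finally show "(if w = (False, u) then 1 else 0) = (\<Sum>i\<in>I. FF i w)"
      by (cases b) (auto simp: w sgn_b_def)
  qed
  have "lap_pst VB EB (False, u) (True, u) (pi / 2)"
    unfolding lap_pst_def
  proof (intro exI[of _ 1] ballI)
    fix w assume wX: "w \<in> VB"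
    then obtain b x where w: "w = (b, x)" "x \<in> VG" by (auto simp: VB_def blowup_V_def)
    have "transition VB EB (pi / 2) (False, u) w = (\<Sum>i\<in>I. exp (\<i> * complex_of_real (pi / 2) * MU i) * FF i w)"
      by (rule transition_decomp[OF finI eigI decX wX])
    also have "\<dots> = - FF None w + (\<Sum>\<rho>\<in>P. FF (Some \<rho>) w)"
    proof -
      have "exp (\<i> * complex_of_real (pi / 2) * MU None) = -1"
        unfolding MU_def deg using exp_odd[OF k_odd] by simp
      moreover have "exp (\<i> * complex_of_real (pi / 2) * MU (Some \<rho>)) = 1" if rhoP: "\<rho> \<in> P" for \<rho>
      proof -
        obtain M where "Lam \<rho> = of_int (2 * M)" using Lam_even[OF rhoP] by blast
        then show ?thesis unfolding MU_def using exp_even[of M] by simp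
      qed
      ultimately show ?thesis unfolding sumI by simp
    qed
    also have "\<dots> = - (1/2) * sgn_b b * (if x = u then 1 else 0) + (1/2) * (\<Sum>\<rho>\<in>P. Psi \<rho> x)"
      by (simp add: FF_def w sum_distrib_left)
    also have "\<dots> = (1/2) * (1 - sgn_b b) * (if x = u then 1 else 0)"
      using dec_G[OF w(2)] by (simp add: algebra_simps)
    also have "\<dots> = (if w = (True, u) then 1 else 0)"
      by (cases b) (auto simp: w sgn_b_def)
    finally show "transition VB EB (pi / 2) (False, u) w = (if w = (True, u) then 1 else 0)" .
  qed
  then show ?thesis by (simp add: VB_def EB_def VG_def EG_def)
qed

end
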